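(* Let $(X,\|\cdot\|)$ be a real Banach space, $T\in(0,\infty]$, $a<0<b$. Let $f:\Omega(T,b)\to X$ satisfy hypothesis (LC) and let $g:\tilde\Omega(T,a,b)\to\mathbb R$ satisfy hypothesis (MJ) with respect to $f$. Fix $x\in X$ with $\|x\|<b$. Let $\varphi:(\alpha,\beta)\to X$ be the maximal solution of $y'=f(t,y)$, $y(0)=x$, and $\psi:(\tilde\alpha,\tilde\beta)\to\mathbb R$ the maximal solution of $z'=g(t,z)$, $z(0)=\|x\|$. Then $\tilde\beta\le\beta$ and $\|\varphi(t)\|\le\psi(t)$ for every $t\in[0,\tilde\beta)$.
   Context: $\tilde\Omega(T,a,b):=(-T,T)\times(a,b)\subset\mathbb R^2$ and $\Omega(T,b):=(-T,T)\times D(0,b)\subset\mathbb R\times X$, where $D(0,b)=\{y\in X:\|y\|<b\}$. Hypothesis (LC) for $f:\Omega(T,b)\to X$: $f$ is continuous and for every compact $K\subset\Omega(T,b)$ there is $C=C(K)>0$ with $\|f(t,y)-f(t,y')\|\le C\|y-y'\|$ for all $(t,y),(t,y')\in K$. Hypothesis (MJ) for $g:\tilde\Omega(T,a,b)\to\mathbb R$ with respect to $f$: (i) $g$ is continuous and locally Lipschitz continuous with respect to $z$; (ii) for every fixed $t\in[0,T)$ the map $[0,b)\ni z\mapsto g(t,z)$ is non-decreasing; (iii) $\|f(t,y)\|\le g(|t|,\|y\|)$ for all $(t,y)\in\Omega(T,b)$. Maximal solutions are solutions defined on the largest open interval containing $0$. *)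

theory Defs
  imports "HOL-Analysis.Analysis"
begin

definition time_int :: "ereal \<Rightarrow> real set" where
  "time_int T = {t. - T < ereal t \<and> ereal t < T}"

definition eint :: "ereal \<Rightarrow> ereal \<Rightarrow> real set" where
  "eint \<alpha> \<beta> = {t. \<alpha> < ereal t \<and> ereal t < \<beta>}"

definition Omega :: "ereal \<Rightarrow> real \<Rightarrow> (real \<times> 'a::real_normed_vector) set" where
  "Omega T b = time_int T \<times> {y. norm y < b}"

definition Omega_tilde :: "ereal \<Rightarrow> real \<Rightarrow> real \<Rightarrow> (real \<times> real) set" where
  "Omega_tilde T a b = time_int T \<times> {a<..<b}"

definition is_solution ::
  "(real \<Rightarrow> 'a::real_normed_vector \<Rightarrow> 'a) \<Rightarrow> (real \<times> 'a) set \<Rightarrow> 'a \<Rightarrow>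
   (real \<Rightarrow> 'a) \<Rightarrow> ereal \<Rightarrow> ereal \<Rightarrow> bool" where
  "is_solution F D y0 y \<alpha> \<beta> \<longleftrightarrow>
     \<alpha> < 0 \<and> 0 < \<beta> \<and> y 0 = y0 \<and>
     (\<forall>t \<in> eint \<alpha> \<beta>. (t, y t) \<in> D \<and> (y has_vector_derivative F t (y t)) (at t))"

definition is_max_solution ::
  "(real \<Rightarrow> 'a::real_normed_vector \<Rightarrow> 'a) \<Rightarrow> (real \<times> 'a) set \<Rightarrow> 'a \<Rightarrow>
   (real \<Rightarrow> 'a) \<Rightarrow> ereal \<Rightarrow> ereal \<Rightarrow> bool" where
  "is_max_solution F D y0 y \<alpha> \<beta> \<longleftrightarrow>
     is_solution F D y0 y \<alpha> \<beta> \<and>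
     (\<forall>z \<alpha>' \<beta>'. is_solution F D y0 z \<alpha>' \<beta>' \<longrightarrow> \<alpha> \<le> \<alpha>' \<and> \<beta>' \<le> \<beta>)"

definition hyp_LC :: "ereal \<Rightarrow> real \<Rightarrow> (real \<Rightarrow> 'a::real_normed_vector \<Rightarrow> 'a) \<Rightarrow> bool" where
  "hyp_LC T b f \<longleftrightarrow>
     continuous_on (Omega T b) (\<lambda>(t,y). f t y) \<and>
     (\<forall>K. compact K \<and> K \<subseteq> Omega T b \<longrightarrow>
        (\<exists>C>0. \<forall>t y y'. (t,y) \<in> K \<and> (t,y') \<in> K \<longrightarrow> norm (f t y - f t y') \<le> C * norm (y - y')))"

definition hyp_MJ :: "ereal \<Rightarrow> real \<Rightarrow> real \<Rightarrow> (real \<Rightarrow> real \<Rightarrow> real) \<Rightarrow>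
    (real \<Rightarrow> 'a::real_normed_vector \<Rightarrow> 'a) \<Rightarrow> bool" where
  "hyp_MJ T a b g f \<longleftrightarrow>
     continuous_on (Omega_tilde T a b) (\<lambda>(t,z). g t z) \<and>
     local_lipschitz (time_int T) {a<..<b} g \<and>
     (\<forall>t. 0 \<le> t \<and> ereal t < T \<longrightarrow> mono_on {0..<b} (g t)) \<and>
     (\<forall>(t,y) \<in> Omega T b. norm (f t y) \<le> g \<bar>t\<bar> (norm y))"

end

theory Submission
  imports Defs
begin

lemma local_exist:
  fixes F :: "real \<Rightarrow> 'a::banach \<Rightarrow> 'a"
  assumes h: "0 < h" and r: "0 < r" and L: "0 \<le> L"
   and cont: "continuous_on ({t1..t1+h} \<times> cball y1 r) (\<lambda>(t,y). F t y)"
   and bnd: "\<And>t y. t \<in> {t1..t1+h} \<Longrightarrow> y \<in> cball y1 r \<Longrightarrow> norm (F t y) \<le> M"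
   and lip: "\<And>t y y'. t \<in> {t1..t1+h} \<Longrightarrow> y \<in> cball y1 r \<Longrightarrow> y' \<in> cball y1 r \<Longrightarrow>
        norm (F t y - F t y') \<le> L * norm (y - y')"
   and hM: "h * M \<le> r" and hL: "h * L < 1"
  obtains u where "u t1 = y1"
    "\<And>t. t \<in> {t1..t1+h} \<Longrightarrow> u t \<in> cball y1 r \<and> (u has_vector_derivative F t (u t)) (at t within {t1..t1+h})"
proof -
  define c where "c s = min (t1+h) (max t1 s)" for s
  have c_in: "c s \<in> {t1..t1+h}" for s using h by (auto simp: c_def)
  have c_id: "s \<in> {t1..t1+h} \<Longrightarrow> c s = s" for s by (auto simp: c_def)
  have c_cont: "continuous_on UNIV c" unfolding c_def by (intro continuous_intros)
  define S where "S = {u :: real \<Rightarrow>\<^sub>C 'a. \<forall>s. apply_bcontfun u s \<in> cball y1 r}"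
  define Pf where "Pf u s = y1 + integral {t1..c s} (\<lambda>r. F r (apply_bcontfun u r))" for u s
  have Gcont: "continuous_on {t1..t1+h} (\<lambda>r. F r (apply_bcontfun u r))" if "u \<in> S" for u
  proof -
    have "continuous_on {t1..t1+h} (\<lambda>x. (\<lambda>(t,y). F t y) ((\<lambda>r. (r, apply_bcontfun u r)) x))"
      by (rule continuous_on_compose2[OF cont]) (use that in \<open>auto simp: S_def intro!: continuous_intros\<close>)
    then show ?thesis by simp
  qed
  have Ibnd: "norm (integral {t1..x} (\<lambda>r. F r (apply_bcontfun u r))) \<le> M * (x - t1)"
    if "u \<in> S" "x \<in> {t1..t1+h}" for u x
    using that by (intro integral_bound) (auto intro: continuous_on_subset[OF Gcont[OF that(1)]] bnd simp: S_def)
  have Pf_in: "Pf u \<in> bcontfun" "\<forall>s. Pf u s \<in> cball y1 r" if "u \<in> S" for u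
  proof -
    have ic: "continuous_on {t1..t1+h} (\<lambda>x. integral {t1..x} (\<lambda>r. F r (apply_bcontfun u r)))"
      by (rule indefinite_integral_continuous_1 integrable_continuous_interval Gcont that)+
    have "continuous_on UNIV (\<lambda>s. (\<lambda>x. integral {t1..x} (\<lambda>r. F r (apply_bcontfun u r))) (c s))"
      by (rule continuous_on_compose2[OF ic c_cont]) (use c_in in auto)
    then have cc: "continuous_on UNIV (Pf u)" unfolding Pf_def by (intro continuous_intros)
    have nb: "norm (Pf u s - y1) \<le> r" for s
    proof -
      have "norm (Pf u s - y1) \<le> M * (c s - t1)" unfolding Pf_def using Ibnd[OF that c_in] by simp
      also have "\<dots> \<le> r"
      proof -
        have "0 \<le> M" using bnd[of t1 y1] h r by (smt (verit) atLeastAtMost_iff centre_in_cball norm_ge_zero)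
        then have "M * (c s - t1) \<le> M * h" using c_in[of s] by (intro mult_left_mono) auto
        then show ?thesis using hM by (simp add: mult.commute)
      qed
      finally show ?thesis .
    qed
    show "\<forall>s. Pf u s \<in> cball y1 r" using nb by (auto simp: dist_norm norm_minus_commute)
    show "Pf u \<in> bcontfun"
    proof (rule bcontfun_normI[OF cc])
      fix s have "norm (Pf u s) \<le> norm y1 + norm (Pf u s - y1)" by (metis add.commute diff_add_cancel norm_triangle_ineq)
      then show "norm (Pf u s) \<le> norm y1 + r" using nb[of s] by simp
    qed
  qed
  define P where "P u = Bcontfun (Pf u)" for u
  have P_app: "apply_bcontfun (P u) = Pf u" if "u \<in> S" for u
    unfolding P_def using Pf_in(1)[OF that] by (simp add: Bcontfun_inverse)
  have "complete S"
  proof (rule complete_closed_subset[OF _ subset_UNIV complete_UNIV])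
    have "closed {u :: real \<Rightarrow>\<^sub>C 'a. apply_bcontfun u s \<in> cball y1 r}" for s
    proof -
      have "continuous_on UNIV (\<lambda>u :: real \<Rightarrow>\<^sub>C 'a. apply_bcontfun u s)"
        by (rule lipschitz_on_continuous_on[where L=1]) (auto intro!: lipschitz_onI dist_bounded)
      from closed_vimage[OF closed_cball this] show ?thesis by (simp add: vimage_def)
    qed
    then have "closed (\<Inter>s. {u :: real \<Rightarrow>\<^sub>C 'a. apply_bcontfun u s \<in> cball y1 r})" by blast
    moreover have "S = (\<Inter>s. {u :: real \<Rightarrow>\<^sub>C 'a. apply_bcontfun u s \<in> cball y1 r})" by (auto simp: S_def)
    ultimately show "closed S" by simp
  qed
  moreover have "S \<noteq> {}"
  proof -
    have "const_bcontfun y1 \<in> S" using r by (simp add: S_def)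
    then show ?thesis by blast
  qed
  moreover have "P ` S \<subseteq> S"
  proof safe
    fix u assume "u \<in> S" then show "P u \<in> S" unfolding S_def using Pf_in(2)[OF \<open>u\<in>S\<close>] P_app[OF \<open>u\<in>S\<close>] by simp
  qed
  moreover have "dist (P u) (P v) \<le> (h * L) * dist u v" if "u \<in> S" "v \<in> S" for u v
  proof (rule dist_bound)
    fix s
    have "dist (P u s) (P v s) = norm (integral {t1..c s} (\<lambda>r. F r (apply_bcontfun u r) - F r (apply_bcontfun v r)))"
      using P_app[OF that(1)] P_app[OF that(2)] c_in[of s]
      by (simp add: Pf_def dist_norm integral_diff integrable_continuous_interval continuous_on_subset[OF Gcont[OF that(1)]]  continuous_on_subset[OF Gcont[OF that(2)]])
    also have "\<dots> \<le> (L * dist u v) * (c s - t1)"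
    proof (rule integral_bound)
      show "t1 \<le> c s" using c_in[of s] by auto
      show "continuous_on {t1..c s} (\<lambda>r. F r (apply_bcontfun u r) - F r (apply_bcontfun v r))"
        using c_in[of s] by (intro continuous_intros continuous_on_subset[OF Gcont[OF that(1)]] continuous_on_subset[OF Gcont[OF that(2)]]) auto
      fix t assume t: "t \<in> {t1..c s}"
      have "norm (F t (apply_bcontfun u t) - F t (apply_bcontfun v t)) \<le> L * norm (apply_bcontfun u t - apply_bcontfun v t)"
        using that t c_in[of s] by (intro lip) (auto simp: S_def)
      also have "\<dots> \<le> L * dist u v" using L dist_bounded[of u t v] by (intro mult_left_mono) (auto simp: dist_norm)
      finally show "norm (F t (apply_bcontfun u t) - F t (apply_bcontfun v t)) \<le> L * dist u v" .
    qed
    also have "\<dots> \<le> (h * L) * dist u v"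
    proof -
      have "(L * dist u v) * (c s - t1) \<le> (L * dist u v) * h" using c_in[of s] L by (intro mult_left_mono) auto
      then show ?thesis by (simp add: algebra_simps)
    qed
    finally show "dist (P u s) (P v s) \<le> (h * L) * dist u v" .
  qed
  ultimately obtain u where u: "u \<in> S" "P u = u"
    using Banach_fix[of S "h*L" P] h L hL by auto
  have ueq: "apply_bcontfun u s = Pf u s" for s using P_app[OF u(1)] u(2) by simp
  show ?thesis
  proof
    show "apply_bcontfun u t1 = y1" using ueq[of t1] h by (simp add: Pf_def c_def)
    fix t assume t: "t \<in> {t1..t1+h}"
    have d: "((\<lambda>x. y1 + integral {t1..x} (\<lambda>r. F r (apply_bcontfun u r))) has_vector_derivative
        F t (apply_bcontfun u t)) (at t within {t1..t1+h})"
      using integral_has_vector_derivative[OF Gcont[OF u(1)] t] by (auto intro!: derivative_eq_intros)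
    have "apply_bcontfun u t \<in> cball y1 r" using u(1) by (simp add: S_def)
    moreover have "(apply_bcontfun u has_vector_derivative F t (apply_bcontfun u t)) (at t within {t1..t1+h})"
    proof (rule has_vector_derivative_transform[OF t _ d])
      fix x assume x: "x \<in> {t1..t1+h}"
      have "apply_bcontfun u x = Pf u x" by (rule ueq)
      then show "apply_bcontfun u x = y1 + integral {t1..x} (\<lambda>r. F r (apply_bcontfun u r))"
        unfolding Pf_def c_id[OF x] .
    qed
    ultimately show "apply_bcontfun u t \<in> cball y1 r \<and> (apply_bcontfun u has_vector_derivative F t (apply_bcontfun u t)) (at t within {t1..t1+h})" by blast
  qed
qed

lemma compact_seq_lim:
  fixes P :: "nat \<Rightarrow> 'b::metric_space"
  assumes "P \<longlonglongrightarrow> z"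
  shows "compact (insert z (range P))"
proof (rule compactI)
  fix C assume op: "\<forall>t\<in>C. open t" and cov: "insert z (range P) \<subseteq> \<Union>C"
  then obtain U where U: "U \<in> C" "z \<in> U" by auto
  then have "eventually (\<lambda>n. P n \<in> U) sequentially"
    using assms op by (simp add: tendsto_def)
  then obtain N where N: "\<And>n. n \<ge> N \<Longrightarrow> P n \<in> U" by (auto simp: eventually_sequentially)
  have "\<forall>n. \<exists>V. V \<in> C \<and> P n \<in> V" using cov by auto
  then obtain V where V: "\<And>n. V n \<in> C" "\<And>n. P n \<in> V n" by metis
  show "\<exists>C'. C' \<subseteq> C \<and> finite C' \<and> insert z (range P) \<subseteq> \<Union>C'"
  proof (intro exI conjI)
    show "insert U (V ` {..<N}) \<subseteq> C" using U V by auto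
    show "finite (insert U (V ` {..<N}))" by simp
    show "insert z (range P) \<subseteq> \<Union>(insert U (V ` {..<N}))"
    proof
      fix w assume "w \<in> insert z (range P)"
      then consider "w = z" | n where "w = P n" by auto
      then show "w \<in> \<Union>(insert U (V ` {..<N}))"
      proof cases
        case 1 then show ?thesis using U by auto
      next
        case (2 n) then show ?thesis using N[of n] V(2)[of n] by (cases "n \<ge> N") auto
      qed
    qed
  qed
qed

lemma time_int_nhd:
  assumes "t0 \<in> time_int T"
  obtains e where "e > 0" "\<And>t. \<bar>t - t0\<bar> \<le> e \<Longrightarrow> t \<in> time_int T"
proof (cases T)
  case (real r)
  with assms have "- r < t0" "t0 < r" by (auto simp: time_int_def)
  show ?thesis
  proof (rule that[of "min (t0 + r) (r - t0) / 2"])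
    show "0 < min (t0 + r) (r - t0) / 2" using \<open>- r < t0\<close> \<open>t0 < r\<close> by simp
    fix t assume "\<bar>t - t0\<bar> \<le> min (t0 + r) (r - t0) / 2"
    then have "- r < t" "t < r" using \<open>- r < t0\<close> \<open>t0 < r\<close> by (auto simp: abs_if split: if_splits)
    then show "t \<in> time_int T" using real by (simp add: time_int_def)
  qed
next
  case PInf then show ?thesis by (intro that[of 1]) (auto simp: time_int_def)
next
  case MInf then show ?thesis using assms by (auto simp: time_int_def)
qed

lemma local_data:
  fixes f :: "real \<Rightarrow> 'a::real_normed_vector \<Rightarrow> 'a"
  assumes LC: "hyp_LC T b f" and p: "(t0,y0) \<in> Omega T b"
  obtains d L M where "d > 0" "L \<ge> 0"
    "\<And>t y. \<bar>t - t0\<bar> \<le> d \<Longrightarrow> norm (y - y0) \<le> d \<Longrightarrow> (t,y) \<in> Omega T b \<and> norm (f t y) \<le> M"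
    "\<And>t y y'. \<bar>t - t0\<bar> \<le> d \<Longrightarrow> norm (y - y0) \<le> d \<Longrightarrow> norm (y' - y0) \<le> d \<Longrightarrow>
        norm (f t y - f t y') \<le> L * norm (y - y')"
proof -
  from p have t0: "t0 \<in> time_int T" and y0: "norm y0 < b" by (auto simp: Omega_def)
  obtain e1 where e1: "e1 > 0" "\<And>t. \<bar>t - t0\<bar> \<le> e1 \<Longrightarrow> t \<in> time_int T"
    using time_int_nhd[OF t0] by blast
  define e0 where "e0 = min e1 ((b - norm y0)/2)"
  have e0: "e0 > 0" using e1 y0 by (simp add: e0_def)
  have inO: "(t,y) \<in> Omega T b" if "\<bar>t - t0\<bar> \<le> e0" "norm (y - y0) \<le> e0" for t y
  proof -
    have "norm y \<le> norm y0 + norm (y - y0)" by (metis add.commute diff_add_cancel norm_triangle_ineq)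
    then have "norm y < b" using that y0 by (simp add: e0_def)
    then show ?thesis using that e1 by (auto simp: Omega_def e0_def)
  qed
  have cont: "continuous_on (Omega T b) (\<lambda>(t,y). f t y)" using LC by (simp add: hyp_LC_def)
  then have "\<forall>e>0. \<exists>d>0. \<forall>q\<in>Omega T b. dist q (t0,y0) < d \<longrightarrow>
      dist ((\<lambda>(t,y). f t y) q) ((\<lambda>(t,y). f t y) (t0,y0)) < e"
    using p unfolding continuous_on_iff by blast
  then obtain d1 where d1: "d1 > 0" "\<And>q. q \<in> Omega T b \<Longrightarrow> dist q (t0,y0) < d1 \<Longrightarrow>
      dist ((\<lambda>(t,y). f t y) q) ((\<lambda>(t,y). f t y) (t0,y0)) < 1"
    using zero_less_one by blast
  have "\<exists>d>0. \<exists>L. \<forall>t y y'. \<bar>t - t0\<bar> \<le> d \<and> norm (y - y0) \<le> d \<and> norm (y' - y0) \<le> d \<longrightarrow>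
        norm (f t y - f t y') \<le> L * norm (y - y')"
  proof (rule ccontr)
    assume H: "\<not> ?thesis"
    define dn where "dn n = min e0 (inverse (real (Suc n)))" for n :: nat
    have dn: "dn n > 0" for n using e0 by (simp add: dn_def)
    have "\<forall>n. \<exists>t y y'. \<bar>t - t0\<bar> \<le> dn n \<and> norm (y - y0) \<le> dn n \<and> norm (y' - y0) \<le> dn n \<and>
        norm (f t y - f t y') > real n * norm (y - y')"
    proof
      fix n
      have "\<not> (\<forall>t y y'. \<bar>t - t0\<bar> \<le> dn n \<and> norm (y - y0) \<le> dn n \<and> norm (y' - y0) \<le> dn n \<longrightarrow>
        norm (f t y - f t y') \<le> real n * norm (y - y'))" using H dn[of n] by blast
      then show "\<exists>t y y'. \<bar>t - t0\<bar> \<le> dn n \<and> norm (y - y0) \<le> dn n \<and> norm (y' - y0) \<le> dn n \<and>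
        norm (f t y - f t y') > real n * norm (y - y')"
        by (auto simp: not_le)
    qed
    then obtain tt yy zz where tyz: "\<And>n. \<bar>tt n - t0\<bar> \<le> dn n" "\<And>n. norm (yy n - y0) \<le> dn n"
      "\<And>n. norm (zz n - y0) \<le> dn n" "\<And>n. norm (f (tt n) (yy n) - f (tt n) (zz n)) > real n * norm (yy n - zz n)"
      by metis
    have dn0: "dn \<longlonglongrightarrow> 0"
      by (rule Lim_null_comparison[OF _ LIMSEQ_inverse_real_of_nat]) (use dn in \<open>auto simp: dn_def less_imp_le\<close>)
    have lim: "(\<lambda>n. w n - l) \<longlonglongrightarrow> 0" if "\<And>n. norm (w n - l) \<le> dn n" for w :: "nat \<Rightarrow> 'c::real_normed_vector" and l
      by (rule Lim_null_comparison[OF _ dn0]) (use that in auto)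
    have tt: "tt \<longlonglongrightarrow> t0" using lim[of tt t0] tyz(1) by (auto intro: LIM_zero_cancel)
    have yy: "yy \<longlonglongrightarrow> y0" using lim[of yy y0] tyz(2) by (auto intro: LIM_zero_cancel)
    have zz: "zz \<longlonglongrightarrow> y0" using lim[of zz y0] tyz(3) by (auto intro: LIM_zero_cancel)
    define K where "K = insert (t0,y0) (range (\<lambda>n. (tt n, yy n))) \<union> insert (t0,y0) (range (\<lambda>n. (tt n, zz n)))"
    have "compact K" unfolding K_def
      by (intro compact_Un compact_seq_lim tendsto_Pair tt yy zz)
    moreover have "K \<subseteq> Omega T b"
    proof -
      have "dn n \<le> e0" for n by (simp add: dn_def)
      then have "(tt n, yy n) \<in> Omega T b" "(tt n, zz n) \<in> Omega T b" for n
        using tyz(1-3)[of n] inO by (meson order_trans)+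
      then show ?thesis using p unfolding K_def by auto
    qed
    moreover have "\<forall>K. compact K \<and> K \<subseteq> Omega T b \<longrightarrow>
        (\<exists>C>0. \<forall>t y y'. (t,y) \<in> K \<and> (t,y') \<in> K \<longrightarrow> norm (f t y - f t y') \<le> C * norm (y - y'))"
      using LC unfolding hyp_LC_def by (rule conjunct2)
    ultimately have "\<exists>C>0. \<forall>t y y'. (t,y) \<in> K \<and> (t,y') \<in> K \<longrightarrow> norm (f t y - f t y') \<le> C * norm (y - y')"
      by blast
    then obtain C where C0: "C > 0" and C1: "\<forall>t y y'. (t,y) \<in> K \<and> (t,y') \<in> K \<longrightarrow> norm (f t y - f t y') \<le> C * norm (y - y')"
      by blast
    have C2: "norm (f t y - f t y') \<le> C * norm (y - y')" if "(t,y) \<in> K" "(t,y') \<in> K" for t y y'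
      using C1 that by blast
    obtain n :: nat where n: "C < real n" using reals_Archimedean2 by blast
    have "norm (f (tt n) (yy n) - f (tt n) (zz n)) \<le> C * norm (yy n - zz n)"
      by (rule C2) (auto simp: K_def)
    also have "\<dots> \<le> real n * norm (yy n - zz n)" using n by (intro mult_right_mono) auto
    finally show False using tyz(4)[of n] by simp
  qed
  then obtain d2 L0 where d2: "d2 > 0" and L0: "\<And>t y y'. \<bar>t - t0\<bar> \<le> d2 \<Longrightarrow> norm (y - y0) \<le> d2 \<Longrightarrow> norm (y' - y0) \<le> d2 \<Longrightarrow>
        norm (f t y - f t y') \<le> L0 * norm (y - y')" by blast
  define d where "d = min e0 (min d2 (d1/3))"
  have d: "d > 0" using e0 d2 d1 by (simp add: d_def)
  show ?thesis
  proof (rule that[of d "max L0 0" "norm (f t0 y0) + 1"])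
    show "0 < d" by (fact d)
    show "0 \<le> max L0 0" by simp
    fix t y assume ty: "\<bar>t - t0\<bar> \<le> d" "norm (y - y0) \<le> d"
    then have O: "(t,y) \<in> Omega T b" using inO by (simp add: d_def)
    have "dist (t,y) (t0,y0) \<le> \<bar>t - t0\<bar> + norm (y - y0)"
      using norm_Pair_le[of "t - t0" "y - y0"] by (simp add: dist_norm)
    also have "\<dots> < d1" using ty d1 by (simp add: d_def)
    finally have "dist (f t y) (f t0 y0) < 1" using d1(2)[OF O] by simp
    then have "norm (f t y) \<le> norm (f t0 y0) + 1"
      by (smt (verit) dist_norm norm_triangle_ineq2)
    then show "(t,y) \<in> Omega T b \<and> norm (f t y) \<le> norm (f t0 y0) + 1" using O by simp
  next
    fix t y y' assume ty: "\<bar>t - t0\<bar> \<le> d" "norm (y - y0) \<le> d" "norm (y' - y0) \<le> d"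
    then have "norm (f t y - f t y') \<le> L0 * norm (y - y')" by (intro L0) (auto simp: d_def)
    also have "\<dots> \<le> max L0 0 * norm (y - y')" by (intro mult_right_mono) auto
    finally show "norm (f t y - f t y') \<le> max L0 0 * norm (y - y')" .
  qed
qed

lemma comparison:
  fixes f :: "real \<Rightarrow> 'a::banach \<Rightarrow> 'a" and g :: "real \<Rightarrow> real \<Rightarrow> real"
  assumes MJ: "hyp_MJ T a b g f"
  and phi: "\<And>t. t \<in> eint \<alpha> \<beta> \<Longrightarrow> (t, \<phi> t) \<in> Omega T b \<and> (\<phi> has_vector_derivative f t (\<phi> t)) (at t)"
  and psi: "\<And>t. t \<in> eint \<alpha>' \<beta>' \<Longrightarrow> (t, \<psi> t) \<in> Omega_tilde T a b \<and> (\<psi> has_vector_derivative g t (\<psi> t)) (at t)"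
  and al: "\<alpha> < 0" "\<alpha>' < 0" and a0: "a < 0" and init: "norm (\<phi> 0) \<le> \<psi> 0"
  and t: "0 \<le> tt" "ereal tt < \<beta>" "ereal tt < \<beta>'"
  shows "norm (\<phi> tt) \<le> \<psi> tt"
proof (rule ccontr)
  assume "\<not> ?thesis"
  then have wt: "norm (\<phi> tt) - \<psi> tt > 0" by simp
  define w where "w r = norm (\<phi> r) - \<psi> r" for r
  have dom: "r \<in> eint \<alpha> \<beta> \<and> r \<in> eint \<alpha>' \<beta>'" if "r \<in> {0..tt}" for r
  proof -
    have "\<alpha> < ereal r" "\<alpha>' < ereal r" using al that by (auto intro: less_le_trans)
    moreover have "ereal r \<le> ereal tt" using that by simp
    then have "ereal r < \<beta>" "ereal r < \<beta>'" using le_less_trans[OF _ t(2)] le_less_trans[OF _ t(3)] by blast+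
    ultimately show ?thesis by (simp add: eint_def)
  qed
  have phiO: "(r, \<phi> r) \<in> Omega T b" and psiO: "(r, \<psi> r) \<in> Omega_tilde T a b"
    and dphi: "(\<phi> has_vector_derivative f r (\<phi> r)) (at r)" and dpsi: "(\<psi> has_vector_derivative g r (\<psi> r)) (at r)"
    if "r \<in> {0..tt}" for r using phi psi dom[OF that] by auto
  have cphi: "continuous_on {0..tt} \<phi>"
    by (rule continuous_at_imp_continuous_on) (use dphi has_vector_derivative_continuous in blast)
  have cpsi: "continuous_on {0..tt} \<psi>"
    by (rule continuous_at_imp_continuous_on) (use dpsi has_vector_derivative_continuous in blast)
  have cw: "continuous_on {0..tt} w" unfolding w_def by (intro continuous_intros cphi cpsi)
  have w0: "w 0 \<le> 0" using init by (simp add: w_def)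
  define A where "A = {0..tt} \<inter> w -` {..0}"
  have "closed A" unfolding A_def by (rule continuous_closed_preimage[OF cw]) auto
  moreover have "0 \<in> A" using w0 t by (simp add: A_def)
  moreover have "bdd_above A" unfolding A_def by (rule bdd_aboveI[of _ tt]) auto
  ultimately have sA: "Sup A \<in> A" using closed_contains_Sup by blast
  define s where "s = Sup A"
  have s: "0 \<le> s" "s \<le> tt" "w s \<le> 0" using sA by (auto simp: s_def A_def)
  have pos: "w r > 0" if "s < r" "r \<le> tt" for r
  proof (rule ccontr)
    assume "\<not> w r > 0"
    then have "r \<in> A" using that s by (auto simp: A_def)
    then have "r \<le> s" unfolding s_def using \<open>bdd_above A\<close> by (rule cSup_upper)
    then show False using that by simp
  qed
  have stt: "s < tt" using s wt by (cases "s = tt") (auto simp: w_def)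
  define X where "X = \<psi> ` {0..tt} \<union> (\<lambda>r. norm (\<phi> r)) ` {0..tt}"
  have cX: "compact X" unfolding X_def
    by (intro compact_Un compact_continuous_image cpsi continuous_intros cphi) auto
  have XS: "X \<subseteq> {a<..<b}"
  proof
    fix z assume "z \<in> X"
    then consider r where "r \<in> {0..tt}" "z = \<psi> r" | r where "r \<in> {0..tt}" "z = norm (\<phi> r)"
      unfolding X_def by blast
    then show "z \<in> {a<..<b}"
    proof cases
      case 1 then show ?thesis using psiO[OF 1(1)] by (simp add: Omega_tilde_def)
    next
      case 2
      have "a < norm (\<phi> r)" using a0 norm_ge_zero[of "\<phi> r"] by linarith
      then show ?thesis using phiO[OF 2(1)] 2 by (simp add: Omega_def)
    qed
  qed
  have TS: "{0..tt} \<subseteq> time_int T" using phiO by (auto simp: Omega_def)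
  have ll: "local_lipschitz (time_int T) {a<..<b} g" using MJ by (simp add: hyp_MJ_def)
  have ll2: "local_lipschitz {0..tt} X g" by (rule local_lipschitz_subset[OF ll TS XS])
  have gcont: "continuous_on (Omega_tilde T a b) (\<lambda>(t,z). g t z)" using MJ by (simp add: hyp_MJ_def)
  have cg: "continuous_on {0..tt} (\<lambda>t. g t z)" if "z \<in> X" for z
  proof -
    have "continuous_on {0..tt} (\<lambda>t. (\<lambda>(t,z). g t z) ((\<lambda>t. (t,z)) t))"
      by (rule continuous_on_compose2[OF gcont]) (use TS XS that in \<open>auto intro!: continuous_intros simp: Omega_tilde_def\<close>)
    then show ?thesis by simp
  qed
  obtain L where L: "\<And>r. r \<in> {0..tt} \<Longrightarrow> L-lipschitz_on X (g r)"
    using local_lipschitz_compact_implies_lipschitz[OF ll2 cX compact_Icc cg] by blast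
  have L0: "0 \<le> L" using L[of 0] t lipschitz_on_nonneg by auto
  define s1 where "s1 = min tt (s + 1 / (2 * (L + 1)))"
  have s1: "s < s1" "s1 \<le> tt" "s1 - s \<le> 1 / (2 * (L + 1))" using stt L0 by (auto simp: s1_def)
  obtain r0 where r0: "r0 \<in> {s..s1}" "\<And>r. r \<in> {s..s1} \<Longrightarrow> w r \<le> w r0"
    using continuous_attains_sup[of "{s..s1}" w] continuous_on_subset[OF cw, of "{s..s1}"] s s1 by auto
  define W where "W = w r0"
  have Wpos: "W > 0" using r0(2)[of s1] pos[of s1] s1 by (auto simp: W_def)
  have r0s: "s < r0" using r0 s Wpos by (cases "r0 = s") (auto simp: W_def)
  have MJmono: "\<forall>t. 0 \<le> t \<and> ereal t < T \<longrightarrow> mono_on {0..<b} (g t)" using MJ by (simp add: hyp_MJ_def)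
  have MJbound: "\<forall>(t,y) \<in> Omega T b. norm (f t y) \<le> g \<bar>t\<bar> (norm y)" using MJ by (simp add: hyp_MJ_def)
  have bnd: "norm (f r (\<phi> r)) \<le> g r (\<psi> r) + L * W" if r: "r \<in> {s..r0}" for r
  proof -
    have r': "r \<in> {0..tt}" using r r0 s s1 by auto
    have "norm (f r (\<phi> r)) \<le> g \<bar>r\<bar> (norm (\<phi> r))" using MJbound phiO[OF r'] by auto
    also have "\<dots> = g r (norm (\<phi> r))" using r' by simp
    also have "\<dots> \<le> g r (\<psi> r) + L * W"
    proof (cases "w r \<le> 0")
      case True
      have "ereal r < T" using phiO[OF r'] by (auto simp: Omega_def time_int_def)
      then have "mono_on {0..<b} (g r)" using MJmono r' by auto
      moreover have "\<psi> r < b" using psiO[OF r'] by (simp add: Omega_tilde_def)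
      moreover have "norm (\<phi> r) < b" using phiO[OF r'] by (simp add: Omega_def)
      moreover have "norm (\<phi> r) \<le> \<psi> r" using True by (simp add: w_def)
      moreover have "0 \<le> \<psi> r" using calculation(4) norm_ge_zero[of "\<phi> r"] by linarith
      ultimately have "g r (norm (\<phi> r)) \<le> g r (\<psi> r)" by (auto elim!: mono_onD)
      moreover have "0 \<le> L * W" using L0 Wpos by simp
      ultimately show ?thesis by linarith
    next
      case False
      have "norm (\<phi> r) \<in> X" "\<psi> r \<in> X" using r' unfolding X_def by auto
      then have "dist (g r (norm (\<phi> r))) (g r (\<psi> r)) \<le> L * dist (norm (\<phi> r)) (\<psi> r)"
        using lipschitz_onD[OF L[OF r']] by blast
      moreover have "dist (norm (\<phi> r)) (\<psi> r) = w r" using False by (simp add: w_def dist_real_def)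
      moreover have "w r \<le> W" using r0 r by (auto simp: W_def)
      ultimately have "g r (norm (\<phi> r)) - g r (\<psi> r) \<le> L * W"
        using L0 by (smt (verit) dist_real_def mult_left_mono)
      then show ?thesis by linarith
    qed
    finally show ?thesis .
  qed
  have sub: "{s..r0} \<subseteq> {0..tt}" using s r0 s1 by auto
  have I1: "((\<lambda>r. f r (\<phi> r)) has_integral (\<phi> r0 - \<phi> s)) {s..r0}"
  proof (rule fundamental_theorem_of_calculus)
    show "s \<le> r0" using r0s by simp
    fix x assume "x \<in> {s..r0}" then have "x \<in> {0..tt}" using sub by blast
    then show "(\<phi> has_vector_derivative f x (\<phi> x)) (at x within {s..r0})" by (rule has_vector_derivative_at_within[OF dphi])
  qed
  have I2: "((\<lambda>r. g r (\<psi> r)) has_integral (\<psi> r0 - \<psi> s)) {s..r0}"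
  proof (rule fundamental_theorem_of_calculus)
    show "s \<le> r0" using r0s by simp
    fix x assume "x \<in> {s..r0}" then have "x \<in> {0..tt}" using sub by blast
    then show "(\<psi> has_vector_derivative g x (\<psi> x)) (at x within {s..r0})" by (rule has_vector_derivative_at_within[OF dpsi])
  qed
  have I3: "((\<lambda>r. g r (\<psi> r) + L * W) has_integral (\<psi> r0 - \<psi> s + (r0 - s) * (L * W))) {s..r0}"
    using has_integral_add[OF I2 has_integral_const_real[of "L * W" s r0]] r0s by simp
  have "norm (\<phi> r0 - \<phi> s) \<le> \<psi> r0 - \<psi> s + (r0 - s) * (L * W)"
    using integral_norm_bound_integral[OF has_integral_integrable[OF I1] has_integral_integrable[OF I3] bnd]
      integral_unique[OF I1] integral_unique[OF I3] by simp
  moreover have "norm (\<phi> r0) \<le> norm (\<phi> s) + norm (\<phi> r0 - \<phi> s)"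
    by (metis add.commute diff_add_cancel norm_triangle_ineq)
  ultimately have "W \<le> w s + (r0 - s) * (L * W)" by (simp add: W_def w_def)
  then have W1: "W \<le> (r0 - s) * (L * W)" using s by linarith
  have "(r0 - s) * (L * W) \<le> (1 / (2 * (L + 1))) * (L * W)"
    using r0 s1 L0 Wpos by (intro mult_right_mono) auto
  also have "\<dots> < W"
  proof -
    have "L * W < 2 * (L + 1) * W" using L0 Wpos by (simp add: algebra_simps) (smt (verit) mult_nonneg_nonneg)
    then show ?thesis using L0 by (simp add: field_simps)
  qed
  finally show False using W1 by simp
qed

theorem mainTheorem7:
  fixes f :: "real \<Rightarrow> 'a::banach \<Rightarrow> 'a"
    and g :: "real \<Rightarrow> real \<Rightarrow> real"
    and T :: ereal and a b :: real and x :: 'a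
    and \<phi> :: "real \<Rightarrow> 'a" and \<psi> :: "real \<Rightarrow> real"
    and \<alpha> \<beta> \<alpha>' \<beta>' :: ereal
  assumes "0 < T"
    and "a < 0" and "0 < b"
    and "hyp_LC T b f"
    and "hyp_MJ T a b g f"
    and "norm x < b"
    and "is_max_solution f (Omega T b) x \<phi> \<alpha> \<beta>"
    and "is_max_solution g (Omega_tilde T a b) (norm x) \<psi> \<alpha>' \<beta>'"
  shows "\<beta>' \<le> \<beta> \<and> (\<forall>t. 0 \<le> t \<and> ereal t < \<beta>' \<longrightarrow> norm (\<phi> t) \<le> \<psi> t)"
proof -
  have solphi: "is_solution f (Omega T b) x \<phi> \<alpha> \<beta>"
    and maxphi: "\<forall>z a2 b2. is_solution f (Omega T b) x z a2 b2 \<longrightarrow> \<alpha> \<le> a2 \<and> b2 \<le> \<beta>"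
    using assms(7) unfolding is_max_solution_def by blast+
  have solpsi: "is_solution g (Omega_tilde T a b) (norm x) \<psi> \<alpha>' \<beta>'"
    using assms(8) unfolding is_max_solution_def by blast
  have al: "\<alpha> < 0" and be: "0 < \<beta>" and phi0: "\<phi> 0 = x"
    and phi: "\<And>t. t \<in> eint \<alpha> \<beta> \<Longrightarrow> (t, \<phi> t) \<in> Omega T b \<and> (\<phi> has_vector_derivative f t (\<phi> t)) (at t)"
    using solphi unfolding is_solution_def by blast+
  have al': "\<alpha>' < 0" and be': "0 < \<beta>'" and psi0: "\<psi> 0 = norm x"
    and psi: "\<And>t. t \<in> eint \<alpha>' \<beta>' \<Longrightarrow> (t, \<psi> t) \<in> Omega_tilde T a b \<and> (\<psi> has_vector_derivative g t (\<psi> t)) (at t)"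
    using solpsi unfolding is_solution_def by blast+
  have init: "norm (\<phi> 0) \<le> \<psi> 0" using phi0 psi0 by simp
  have comp: "norm (\<phi> t) \<le> \<psi> t" if "0 \<le> t" "ereal t < \<beta>" "ereal t < \<beta>'" for t
    by (rule comparison[OF assms(5) phi psi al al' assms(2) init that])
  have MJmono: "\<forall>t. 0 \<le> t \<and> ereal t < T \<longrightarrow> mono_on {0..<b} (g t)" using assms(5) by (simp add: hyp_MJ_def)
  have MJbound: "\<forall>(t,y) \<in> Omega T b. norm (f t y) \<le> g \<bar>t\<bar> (norm y)" using assms(5) by (simp add: hyp_MJ_def)
  have gcont: "continuous_on (Omega_tilde T a b) (\<lambda>(t,z). g t z)" using assms(5) by (simp add: hyp_MJ_def)
  have fcont: "continuous_on (Omega T b) (\<lambda>(t,y). f t y)" using assms(4) by (simp add: hyp_LC_def)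
  have bb: "\<beta>' \<le> \<beta>"
  proof (rule ccontr)
    assume "\<not> \<beta>' \<le> \<beta>"
    then have bb: "\<beta> < \<beta>'" by simp
    obtain B where B: "\<beta> = ereal B" using be bb by (cases \<beta>) auto
    have B0: "0 < B" using be B by simp
    have dom': "r \<in> eint \<alpha>' \<beta>'" if "r \<in> {0..B}" for r
    proof -
      have "\<alpha>' < ereal r" using al' that by (auto intro: less_le_trans)
      moreover have "ereal r \<le> ereal B" using that by simp
      then have "ereal r < \<beta>'" using le_less_trans[OF _ bb] B by simp
      ultimately show ?thesis by (simp add: eint_def)
    qed
    have psiO: "(r, \<psi> r) \<in> Omega_tilde T a b" and dpsi: "(\<psi> has_vector_derivative g r (\<psi> r)) (at r)"
      if "r \<in> {0..B}" for r using psi dom'[OF that] by auto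
    have TB: "r \<in> time_int T" if "r \<in> {0..B}" for r using psiO[OF that] by (simp add: Omega_tilde_def)
    have dom: "r \<in> eint \<alpha> \<beta>" if "r \<in> {0..<B}" for r
    proof -
      have "\<alpha> < ereal r" using al that by (auto intro: less_le_trans)
      then show ?thesis using that B by (simp add: eint_def)
    qed
    have phiO: "(r, \<phi> r) \<in> Omega T b" and dphi: "(\<phi> has_vector_derivative f r (\<phi> r)) (at r)"
      if "r \<in> {0..<B}" for r using phi dom[OF that] by auto
    have cpsi: "continuous_on {0..B} \<psi>"
      by (rule continuous_at_imp_continuous_on) (use dpsi has_vector_derivative_continuous in blast)
    obtain rm where rm: "rm \<in> {0..B}" "\<And>r. r \<in> {0..B} \<Longrightarrow> \<psi> r \<le> \<psi> rm"
      using continuous_attains_sup[OF compact_Icc _ cpsi] B0 by auto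
    define R where "R = \<psi> rm"
    have Rb: "R < b" using psiO[OF rm(1)] by (simp add: R_def Omega_tilde_def)
    have "\<psi> 0 \<le> \<psi> rm" using rm(2)[of 0] B0 by simp
    then have R0: "0 \<le> R" using psi0 norm_ge_zero[of x] unfolding R_def by linarith
    have nphi: "norm (\<phi> r) \<le> R" if "r \<in> {0..<B}" for r
    proof -
      have "ereal r < \<beta>" using that B by simp
      then have "norm (\<phi> r) \<le> \<psi> r" using comp[of r] that bb by (auto intro: less_trans)
      also have "\<dots> \<le> R" using rm(2)[of r] that by (simp add: R_def)
      finally show ?thesis .
    qed
    have cgR: "continuous_on {0..B} (\<lambda>t. g t R)"
    proof -
      have "continuous_on {0..B} (\<lambda>t. (\<lambda>(t,z). g t z) ((\<lambda>t. (t,R)) t))"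
        by (rule continuous_on_compose2[OF gcont]) (use TB R0 Rb assms(2) in \<open>auto intro!: continuous_intros simp: Omega_tilde_def\<close>)
      then show ?thesis by simp
    qed
    obtain Mg where Mg: "\<And>t. t \<in> {0..B} \<Longrightarrow> norm (g t R) \<le> Mg"
      using compact_imp_bounded[OF compact_continuous_image[OF cgR compact_Icc]] unfolding bounded_iff by (metis image_eqI)
    have fb: "norm (f r (\<phi> r)) \<le> Mg" if r: "r \<in> {0..<B}" for r
    proof -
      have "norm (f r (\<phi> r)) \<le> g \<bar>r\<bar> (norm (\<phi> r))" using MJbound phiO[OF r] by auto
      also have "\<dots> = g r (norm (\<phi> r))" using r by simp
      also have "\<dots> \<le> g r R"
      proof -
        have "ereal r < T" using TB[of r] r by (auto simp: time_int_def)
        then have "mono_on {0..<b} (g r)" using MJmono r by auto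
        then show ?thesis using nphi[OF r] R0 Rb by (auto elim!: mono_onD)
      qed
      also have "\<dots> \<le> Mg" using Mg[of r] r by auto
      finally show ?thesis .
    qed
    have Mg0: "0 \<le> Mg" using fb[of 0] B0 by (smt (verit) atLeastLessThan_iff norm_ge_zero)
    have lipphi: "norm (\<phi> t - \<phi> s) \<le> Mg * (t - s)" if "s \<le> t" "s \<in> {0..<B}" "t \<in> {0..<B}" for s t
    proof -
      have I: "((\<lambda>r. f r (\<phi> r)) has_integral (\<phi> t - \<phi> s)) {s..t}"
      proof (rule fundamental_theorem_of_calculus)
        show "s \<le> t" by fact
        fix r assume "r \<in> {s..t}" then have "r \<in> {0..<B}" using that by auto
        then show "(\<phi> has_vector_derivative f r (\<phi> r)) (at r within {s..t})" by (rule has_vector_derivative_at_within[OF dphi])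
      qed
      have bnd': "norm (f r (\<phi> r)) \<le> Mg" if "r \<in> cbox s t" for r
        using fb that \<open>s \<in> {0..<B}\<close> \<open>t \<in> {0..<B}\<close> by auto
      have I': "((\<lambda>r. f r (\<phi> r)) has_integral (\<phi> t - \<phi> s)) (cbox s t)" using I by simp
      show ?thesis using has_integral_bound[OF Mg0 I' bnd'] that by (simp add: content_real)
    qed
    have "Mg-lipschitz_on {0..<B} \<phi>"
    proof (rule lipschitz_onI)
      fix s t assume st: "s \<in> {0..<B}" "t \<in> {0..<B}"
      show "dist (\<phi> s) (\<phi> t) \<le> Mg * dist s t"
      proof (cases "s \<le> t")
        case True then show ?thesis using lipphi[OF True st] by (simp add: dist_norm norm_minus_commute dist_real_def)
      next
        case False then show ?thesis using lipphi[of t s] st by (simp add: dist_norm dist_real_def)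
      qed
    qed (fact Mg0)
    then have uc: "uniformly_continuous_on {0..<B} \<phi>" by (rule lipschitz_on_uniformly_continuous)
    obtain ys where lim: "(\<phi> \<longlongrightarrow> ys) (at B within {0..<B})"
      using uniformly_continuous_on_extension_at_closure[OF uc, of B] B0 by auto
    have near: "\<exists>t. 0 < t \<and> t < B \<and> B - k < t \<and> dist (\<phi> t) ys < e" if "e > 0" "k > 0" for e k
    proof -
      have "eventually (\<lambda>t. dist (\<phi> t) ys < e) (at B within {0..<B})" using tendstoD[OF lim that(1)] .
      then obtain d where d: "d > 0" "\<And>t. t \<in> {0..<B} \<Longrightarrow> t \<noteq> B \<Longrightarrow> dist t B < d \<Longrightarrow> dist (\<phi> t) ys < e"
        unfolding eventually_at by blast
      define t where "t = B - min d (min k B) / 2"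
      have "0 < t" "t < B" "B - k < t" "dist t B < d" using d B0 that by (auto simp: t_def dist_real_def)
      then show ?thesis using d(2)[of t] by auto
    qed
    have nys: "norm ys \<le> R"
    proof (rule ccontr)
      assume "\<not> norm ys \<le> R"
      then obtain t where t: "0 < t" "t < B" "dist (\<phi> t) ys < norm ys - R" using near[of "norm ys - R" 1] by auto
      have "norm ys \<le> norm (\<phi> t) + dist (\<phi> t) ys" by (simp add: dist_norm) (metis add.commute diff_add_cancel norm_minus_commute norm_triangle_ineq)
      then show False using nphi[of t] t by auto
    qed
    have BO: "(B, ys) \<in> Omega T b" using TB[of B] B0 nys Rb by (simp add: Omega_def)
    obtain d L M where d: "d > 0" and L: "L \<ge> 0"
      and dM: "\<And>t y. \<bar>t - B\<bar> \<le> d \<Longrightarrow> norm (y - ys) \<le> d \<Longrightarrow> (t,y) \<in> Omega T b \<and> norm (f t y) \<le> M"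
      and dL: "\<And>t y y'. \<bar>t - B\<bar> \<le> d \<Longrightarrow> norm (y - ys) \<le> d \<Longrightarrow> norm (y' - ys) \<le> d \<Longrightarrow>
        norm (f t y - f t y') \<le> L * norm (y - y')"
      using local_data[OF assms(4) BO] by blast
    have M0: "0 \<le> M" using dM[of B ys] d by (smt (verit) norm_ge_zero diff_self norm_zero abs_zero)
    define h where "h = min (d/2) (min (d / (2*M+2)) (1 / (2*L+2)))"
    have hp: "0 < d / (2*M+2)" "0 < 1 / (2*L+2)" using d M0 L by auto
    have h: "0 < h" "h \<le> d/2" "h \<le> d / (2*M+2)" "h \<le> 1 / (2*L+2)"
      unfolding h_def using hp d by (auto simp del: divide_const_simps)
    obtain t1 where t1: "0 < t1" "t1 < B" "B - h < t1" "dist (\<phi> t1) ys < d/2"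
      using near[of "d/2" h] d h by auto
    have reg: "\<bar>t - B\<bar> \<le> d \<and> norm (y - ys) \<le> d" if "t \<in> {t1..t1+h}" "y \<in> cball (\<phi> t1) (d/2)" for t y
    proof
      show "\<bar>t - B\<bar> \<le> d" using that t1 h by auto
      have "norm (y - ys) \<le> norm (y - \<phi> t1) + norm (\<phi> t1 - ys)" by (metis diff_add_cancel norm_triangle_ineq add_diff_eq diff_diff_eq2)
      also have "\<dots> \<le> d/2 + d/2" using that(2) t1(4) by (intro add_mono) (auto simp: dist_norm norm_minus_commute)
      finally show "norm (y - ys) \<le> d" by simp
    qed
    have hM: "h * M \<le> d/2"
    proof -
      have "h * M \<le> d / (2*M+2) * M" using h M0 by (intro mult_right_mono) auto
      also have "\<dots> \<le> d/2" using d M0 by (simp add: field_simps)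
      finally show ?thesis .
    qed
    have hL: "h * L < 1"
    proof -
      have "h * L \<le> 1 / (2*L+2) * L" using h L by (intro mult_right_mono) auto
      also have "\<dots> < 1" using L by (simp add: field_simps)
      finally show ?thesis .
    qed
    have cont1: "continuous_on ({t1..t1+h} \<times> cball (\<phi> t1) (d/2)) (\<lambda>(t,y). f t y)"
      by (rule continuous_on_subset[OF fcont]) (use reg dM in auto)
    obtain u where u0: "u t1 = \<phi> t1" and u: "\<And>t. t \<in> {t1..t1+h} \<Longrightarrow> u t \<in> cball (\<phi> t1) (d/2) \<and>
        (u has_vector_derivative f t (u t)) (at t within {t1..t1+h})"
    proof (rule local_exist[OF h(1) _ L cont1 _ _ hM hL])
      show "0 < d/2" using d by simp
      show "norm (f t y) \<le> M" if "t \<in> {t1..t1+h}" "y \<in> cball (\<phi> t1) (d/2)" for t y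
        using reg[OF that] dM by blast
      show "norm (f t y - f t y') \<le> L * norm (y - y')"
        if "t \<in> {t1..t1+h}" "y \<in> cball (\<phi> t1) (d/2)" "y' \<in> cball (\<phi> t1) (d/2)" for t y y'
        using reg[OF that(1,2)] reg[OF that(1,3)] dL by blast
    qed blast
    define z where "z t = (if t \<in> {..t1} then \<phi> t else u t)" for t
    have "is_solution f (Omega T b) x z \<alpha> (ereal (t1 + h))"
      unfolding is_solution_def
    proof (intro conjI ballI)
      show "\<alpha> < 0" by fact
      show "0 < ereal (t1 + h)" using t1 h by simp
      show "z 0 = x" using t1 phi0 by (simp add: z_def)
      fix t assume t: "t \<in> eint \<alpha> (ereal (t1 + h))"
      then have tlt: "t < t1 + h" and tal: "\<alpha> < ereal t" by (auto simp: eint_def)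
      show "(t, z t) \<in> Omega T b"
      proof (cases "t \<le> t1")
        case True
        then have "t \<in> eint \<alpha> \<beta>" using tal t1 B by (simp add: eint_def)
        then show ?thesis using phi True by (simp add: z_def)
      next
        case False
        then have tm: "t \<in> {t1..t1+h}" using tlt by auto
        have "u t \<in> cball (\<phi> t1) (d/2)" using u[OF tm] by blast
        then have "(t, u t) \<in> Omega T b" using reg[OF tm] dM by blast
        then show ?thesis using False by (simp add: z_def)
      qed
      have S: "{..t1} \<union> {t1<..<t1+h} = {..<t1+h}" using h by auto
      have "((\<lambda>t. if t \<in> {..t1} then \<phi> t else u t) has_vector_derivative
          (if t \<in> {..t1} then f t (\<phi> t) else f t (u t))) (at t within {..<t1+h})"
      proof (rule has_vector_derivative_If_within_closures[OF _ S[symmetric]])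
        show "t \<in> {..t1} \<union> {t1<..<t1+h}" using S tlt by auto
        assume "t \<in> {..t1} \<union> (closure {..t1} \<inter> closure {t1<..<t1+h})"
        then have tt: "t \<le> t1" using h by auto
        then have "t \<in> eint \<alpha> \<beta>" using tal t1 B by (simp add: eint_def)
        then show "(\<phi> has_vector_derivative f t (\<phi> t)) (at t within {..t1} \<union> (closure {..t1} \<inter> closure {t1<..<t1+h}))"
          using phi has_vector_derivative_at_within by blast
      next
        assume "t \<in> {t1<..<t1+h} \<union> (closure {..t1} \<inter> closure {t1<..<t1+h})"
        then have tt: "t \<in> {t1..t1+h}" using h by auto
        have "{t1<..<t1+h} \<union> (closure {..t1} \<inter> closure {t1<..<t1+h}) \<subseteq> {t1..t1+h}" using h by auto
        then show "(u has_vector_derivative f t (u t)) (at t within {t1<..<t1+h} \<union> (closure {..t1} \<inter> closure {t1<..<t1+h}))"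
          using u[OF tt] has_vector_derivative_within_subset by blast
      next
        assume "t \<in> closure {..t1}" "t \<in> closure {t1<..<t1+h}"
        then have "t = t1" using h by auto
        then show "\<phi> t = u t" using u0 by simp
        then show "f t (\<phi> t) = f t (u t)" by simp
      qed
      moreover have "t \<in> {..<t1+h}" using tlt by simp
      ultimately have "((\<lambda>t. if t \<in> {..t1} then \<phi> t else u t) has_vector_derivative
          (if t \<in> {..t1} then f t (\<phi> t) else f t (u t))) (at t)"
        using at_within_open[of t "{..<t1+h}"] by simp
      then show "(z has_vector_derivative f t (z t)) (at t)"
        unfolding z_def[abs_def] by (simp add: if_distrib)
    qed
    then have "ereal (t1 + h) \<le> \<beta>" using maxphi by blast
    then show False using B t1 by simp
  qed
  show ?thesis
  proof (intro conjI allI impI)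
    show "\<beta>' \<le> \<beta>" by fact
    fix t assume "0 \<le> t \<and> ereal t < \<beta>'"
    then show "norm (\<phi> t) \<le> \<psi> t" using comp bb by (meson less_le_trans)
  qed
qed

end
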